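(* Let $\Omega\subset\mathbb{C}^n$ be a bounded domain, let $\mathcal R$ and $\mathcal R'$ be quasi-free Hilbert modules of rank $m$, $1\le m<\infty$, over $A(\Omega)$ with generating sets $\{f_i\}_{i=1}^m$ and $\{g_i\}_{i=1}^m$, and let $\delta=\delta(\mathcal R,\mathcal R')$ with Hilbert space adjoint $\delta^*:\mathcal R'\to\mathcal R$. Then the domain of $\delta^*$ contains the finite linear span of $\{k'^i_z:z\in\Omega,1\le i\le m\}$, and for $z\in\Omega$ and $1\le i\le m$, \[\delta^*k'^i_z=\sum_j X_{ij}(z)\,k^j_z.\]
   Context: $A(\Omega)$ is the closure, in the supremum norm on $\Omega$, of the set of functions holomorphic on some neighbourhood of $\overline\Omega$; $\ell^2_m$ is the $m$-dimensional Hilbert space. A quasi-free Hilbert module of rank $m$ over $A(\Omega)$ is a Hilbert space $\mathcal R$ obtained as the completion of $A(\Omega)\otimes\ell^2_m$ (regarded as $\ell^2_m$-valued holomorphic functions on $\Omega$) with respect to an inner product such that: (1) for each $z\in\Omega$ evaluation at $z$ is bounded, with norm locally uniformly bounded in $z$; (2) $\|\varphi F\|_{\mathcal R}\le\|\varphi\|_{A(\Omega)}\|F\|_{\mathcal R}$; (3) if $(F_i)$ is Cauchy in $\mathcal R$-norm, then $F_i(z)\to0$ for all $z$ iff $\|F_i\|_{\mathcal R}\to0$. A generating set is $\{f_1,\dots,f_m\}\subset\mathcal R$ whose $A(\Omega)$-multiples span a dense subspace and such that its localizations at each $z$ form a basis (so $\{f_i(z)\}$ is a basis of $\ell^2_m$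 for each $z$). $\delta(\mathcal R,\mathcal R')$ is the closed, densely defined module transformation whose graph is the closure in $\mathcal R\oplus\mathcal R'$ of the span of $\{\varphi f_i\oplus\varphi g_i:\varphi\in A(\Omega),1\le i\le m\}$. The dual sets of kernel functions are the vectors $k^i_z\in\mathcal R$ and $k'^i_z\in\mathcal R'$ determined by $\langle k,k^i_z\rangle_{\mathcal R}=\langle k(z),f_i(z)\rangle_{\ell^2_m}$ for all $k\in\mathcal R$ and $\langle h,k'^i_z\rangle_{\mathcal R'}=\langle h(z),g_i(z)\rangle_{\ell^2_m}$ for all $h\in\mathcal R'$. For $z\in\Omega$, $(X_{ij}(z))_{i,j=1}^m$ is the matrix satisfying $\langle\sum_jX_{ij}(z)f_j(z),f_\ell(z)\rangle_{\ell^2_m}=\langle g_i(z),g_\ell(z)\rangle_{\ell^2_m}$ for $1\le i,\ell\le m$. *)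

theory Defs
  imports "HOL-Analysis.Analysis" "HOL-Library.Function_Algebras"
begin

(* Points of C^n are  complex^'n ;  l^2_m is  complex^'m  with the standard inner product. *)

definition l2inner :: "complex^'m \<Rightarrow> complex^'m \<Rightarrow> complex" where
  "l2inner u v = (\<Sum>k\<in>UNIV. u $ k * cnj (v $ k))"

definition bounded_domain :: "(complex^'n) set \<Rightarrow> bool" where
  "bounded_domain \<Omega> \<longleftrightarrow> open \<Omega> \<and> connected \<Omega> \<and> \<Omega> \<noteq> {} \<and> bounded \<Omega>"

definition holo_on :: "(complex^'n) set \<Rightarrow> (complex^'n \<Rightarrow> complex) \<Rightarrow> bool" where
  "holo_on U \<phi> \<longleftrightarrow> (\<forall>z\<in>U. \<exists>L. (\<phi> has_derivative L) (at z) \<and> (\<forall>c v. L (c *s v) = c * L v))"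

(* A(Omega): sup-norm closure on Omega of functions holomorphic near closure Omega *)
definition Aalg :: "(complex^'n) set \<Rightarrow> (complex^'n \<Rightarrow> complex) set" where
  "Aalg \<Omega> = {\<phi>. \<forall>\<epsilon>>0. \<exists>U \<psi>. open U \<and> closure \<Omega> \<subseteq> U \<and> holo_on U \<psi> \<and>
                         (SUP z\<in>\<Omega>. norm (\<phi> z - \<psi> z)) < \<epsilon> \<and> bdd_above ((\<lambda>z. norm (\<phi> z - \<psi> z)) ` \<Omega>)}"

definition supnorm :: "(complex^'n) set \<Rightarrow> (complex^'n \<Rightarrow> complex) \<Rightarrow> real" where
  "supnorm \<Omega> \<phi> = (SUP z\<in>\<Omega>. norm (\<phi> z))"

definition mmult :: "('a \<Rightarrow> complex) \<Rightarrow> ('a \<Rightarrow> complex^'m) \<Rightarrow> ('a \<Rightarrow> complex^'m)" where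
  "mmult \<phi> F = (\<lambda>z. \<phi> z *s F z)"

definition sc :: "complex \<Rightarrow> ('a \<Rightarrow> complex^'m) \<Rightarrow> ('a \<Rightarrow> complex^'m)" where
  "sc c F = (\<lambda>z. c *s F z)"

(* A(Omega) \<otimes> l^2_m regarded as l^2_m-valued functions on Omega (extended by 0 outside) *)
definition Avec :: "(complex^'n) set \<Rightarrow> (complex^'n \<Rightarrow> complex^'m) set" where
  "Avec \<Omega> = {F. (\<forall>k. (\<lambda>z. F z $ k) \<in> Aalg \<Omega>) \<and> (\<forall>z. z \<notin> \<Omega> \<longrightarrow> F z = 0)}"

definition hnorm :: "('f \<Rightarrow> 'f \<Rightarrow> complex) \<Rightarrow> 'f \<Rightarrow> real" where
  "hnorm ip F = sqrt (Re (ip F F))"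

definition hilbert_fun_space ::
  "('a \<Rightarrow> complex^'m) set \<Rightarrow> (('a \<Rightarrow> complex^'m) \<Rightarrow> ('a \<Rightarrow> complex^'m) \<Rightarrow> complex) \<Rightarrow> bool" where
  "hilbert_fun_space H ip \<longleftrightarrow>
     0 \<in> H \<and> (\<forall>F\<in>H. \<forall>G\<in>H. F + G \<in> H) \<and> (\<forall>c. \<forall>F\<in>H. sc c F \<in> H) \<and>
     (\<forall>F\<in>H. \<forall>G\<in>H. \<forall>K\<in>H. ip (F + G) K = ip F K + ip G K) \<and>
     (\<forall>c. \<forall>F\<in>H. \<forall>G\<in>H. ip (sc c F) G = c * ip F G) \<and>
     (\<forall>F\<in>H. \<forall>G\<in>H. ip G F = cnj (ip F G)) \<and>
     (\<forall>F\<in>H. F \<noteq> 0 \<longrightarrow> Re (ip F F) > 0) \<and>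
     (\<forall>X::nat \<Rightarrow> _. (\<forall>k. X k \<in> H) \<and> (\<forall>\<epsilon>>0. \<exists>N. \<forall>a\<ge>N. \<forall>b\<ge>N. hnorm ip (X a - X b) < \<epsilon>)
          \<longrightarrow> (\<exists>L\<in>H. \<forall>\<epsilon>>0. \<exists>N. \<forall>a\<ge>N. hnorm ip (X a - L) < \<epsilon>))"

(* quasi-free Hilbert module over A(Omega) (rank m = CARD('m)), realised as the completion
   of A(Omega) \<otimes> l^2_m inside the l^2_m-valued functions on Omega *)
definition quasi_free ::
  "(complex^'n) set \<Rightarrow> (complex^'n \<Rightarrow> complex^'m) set \<Rightarrow>
   ((complex^'n \<Rightarrow> complex^'m) \<Rightarrow> (complex^'n \<Rightarrow> complex^'m) \<Rightarrow> complex) \<Rightarrow> bool" where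
  "quasi_free \<Omega> H ip \<longleftrightarrow>
     hilbert_fun_space H ip \<and>
     (\<forall>F\<in>H. \<forall>z. z \<notin> \<Omega> \<longrightarrow> F z = 0) \<and>
     Avec \<Omega> \<subseteq> H \<and>
     (\<forall>F\<in>H. \<forall>\<epsilon>>0. \<exists>G\<in>Avec \<Omega>. hnorm ip (F - G) < \<epsilon>) \<and>
     (\<forall>z\<in>\<Omega>. \<exists>r>0. \<exists>C. \<forall>w\<in>\<Omega> \<inter> ball z r. \<forall>F\<in>H. norm (F w) \<le> C * hnorm ip F) \<and>
     (\<forall>\<phi>\<in>Aalg \<Omega>. \<forall>F\<in>H. mmult \<phi> F \<in> H \<and> hnorm ip (mmult \<phi> F) \<le> supnorm \<Omega> \<phi> * hnorm ip F)"

definition is_basis :: "('m \<Rightarrow> complex^'m) \<Rightarrow> bool" where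
  "is_basis v \<longleftrightarrow> (\<forall>w. \<exists>!c. w = (\<Sum>i\<in>UNIV. c i *s v i))"

definition generating_set ::
  "(complex^'n) set \<Rightarrow> (complex^'n \<Rightarrow> complex^'m) set \<Rightarrow>
   ((complex^'n \<Rightarrow> complex^'m) \<Rightarrow> (complex^'n \<Rightarrow> complex^'m) \<Rightarrow> complex) \<Rightarrow>
   ('m \<Rightarrow> (complex^'n \<Rightarrow> complex^'m)) \<Rightarrow> bool" where
  "generating_set \<Omega> H ip f \<longleftrightarrow>
     (\<forall>i. f i \<in> H) \<and>
     (\<forall>F\<in>H. \<forall>\<epsilon>>0. \<exists>T c. finite T \<and> T \<subseteq> {mmult \<phi> (f i) | \<phi> i. \<phi> \<in> Aalg \<Omega>} \<and>
                           hnorm ip (F - (\<Sum>t\<in>T. sc (c t) t)) < \<epsilon>) \<and>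
     (\<forall>z\<in>\<Omega>. is_basis (\<lambda>i. f i z))"

definition fspan :: "('a \<Rightarrow> complex^'m) set \<Rightarrow> ('a \<Rightarrow> complex^'m) set" where
  "fspan S = {\<Sum>t\<in>T. sc (c t) t | T c. finite T \<and> T \<subseteq> S}"

definition pspan :: "(('a \<Rightarrow> complex^'m) \<times> ('b \<Rightarrow> complex^'k)) set \<Rightarrow>
                     (('a \<Rightarrow> complex^'m) \<times> ('b \<Rightarrow> complex^'k)) set" where
  "pspan S = {(\<Sum>t\<in>T. sc (c t) (fst t), \<Sum>t\<in>T. sc (c t) (snd t)) | T c. finite T \<and> T \<subseteq> S}"

(* graph of delta(R,R'): closure in R \<oplus> R' of span{phi f_i \<oplus> phi g_i} *)
definition delta_graph ::
  "(complex^'n) set \<Rightarrow>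
   (complex^'n \<Rightarrow> complex^'m) set \<Rightarrow> ((complex^'n \<Rightarrow> complex^'m) \<Rightarrow> (complex^'n \<Rightarrow> complex^'m) \<Rightarrow> complex) \<Rightarrow>
   (complex^'n \<Rightarrow> complex^'m) set \<Rightarrow> ((complex^'n \<Rightarrow> complex^'m) \<Rightarrow> (complex^'n \<Rightarrow> complex^'m) \<Rightarrow> complex) \<Rightarrow>
   ('m \<Rightarrow> (complex^'n \<Rightarrow> complex^'m)) \<Rightarrow> ('m \<Rightarrow> (complex^'n \<Rightarrow> complex^'m)) \<Rightarrow>
   ((complex^'n \<Rightarrow> complex^'m) \<times> (complex^'n \<Rightarrow> complex^'m)) set" where
  "delta_graph \<Omega> H ip H' ip' f g =
     {(u, v). u \<in> H \<and> v \<in> H' \<and>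
        (\<forall>\<epsilon>>0. \<exists>(a, b)\<in>pspan {(mmult \<phi> (f i), mmult \<phi> (g i)) | \<phi> i. \<phi> \<in> Aalg \<Omega>}.
            sqrt ((hnorm ip (u - a))\<^sup>2 + (hnorm ip' (v - b))\<^sup>2) < \<epsilon>)}"

(* graph of the Hilbert space adjoint T^* : H' \<rightarrow> H of an operator T : H \<rightarrow> H' with graph G:
   (y, x) \<in> graph T^*  iff  <T u, y> = <u, x> for all u in dom T *)
definition adjoint_graph ::
  "('f set) \<Rightarrow> ('f \<Rightarrow> 'f \<Rightarrow> complex) \<Rightarrow> ('g set) \<Rightarrow> ('g \<Rightarrow> 'g \<Rightarrow> complex) \<Rightarrow>
   ('f \<times> 'g) set \<Rightarrow> ('g \<times> 'f) set" where
  "adjoint_graph H ip H' ip' G = {(y, x). y \<in> H' \<and> x \<in> H \<and> (\<forall>(u, v)\<in>G. ip' v y = ip u x)}"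

end

theory Submission
  imports Defs
begin


lemma fsum_apply: "(\<Sum>t\<in>T. (F t :: 'a \<Rightarrow> 'b::comm_monoid_add)) x = (\<Sum>t\<in>T. F t x)"
  by (induction T rule: infinite_finite_induct) auto

lemma l2_add1: "l2inner (a + b) c = l2inner a c + l2inner b c"
  by (simp add: l2inner_def sum.distrib distrib_right)
lemma l2_diff1: "l2inner (a - b) c = l2inner a c - l2inner b c"
  by (simp add: l2inner_def sum_subtractf left_diff_distrib)
lemma l2_scale1: "l2inner (s *s a) c = s * l2inner a c"
  by (simp add: l2inner_def sum_distrib_left mult.assoc)
lemma l2_cnj: "l2inner a b = cnj (l2inner b a)"
  by (simp add: l2inner_def mult.commute)
lemma l2_zero1: "l2inner 0 y = 0" by (simp add: l2inner_def)
lemma l2_sum1: "finite T \<Longrightarrow> l2inner (\<Sum>t\<in>T. c t *s a t) y = (\<Sum>t\<in>T. c t * l2inner (a t) y)"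
  by (induction T rule: finite_induct) (simp_all add: l2_add1 l2_scale1 l2_zero1)
lemma l2_sum2: "finite T \<Longrightarrow> l2inner x (\<Sum>t\<in>T. c t *s a t) = (\<Sum>t\<in>T. cnj (c t) * l2inner x (a t))"
proof -
  assume T: "finite T"
  have "l2inner x (\<Sum>t\<in>T. c t *s a t) = cnj (l2inner (\<Sum>t\<in>T. c t *s a t) x)" by (rule l2_cnj)
  also have "\<dots> = (\<Sum>t\<in>T. cnj (c t) * l2inner x (a t))" using T
    by (simp add: l2_sum1 l2_cnj[of x])
  finally show ?thesis .
qed
lemma l2_bound: "norm (l2inner x (y::complex^'m)) \<le> real CARD('m) * norm x * norm y"
proof -
  have "norm (l2inner x y) \<le> (\<Sum>k\<in>UNIV. norm (x $ k * cnj (y $ k)))"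
    unfolding l2inner_def by (rule norm_sum)
  also have "\<dots> \<le> (\<Sum>k\<in>(UNIV::'m set). norm x * norm y)"
    by (rule sum_mono) (simp add: norm_mult mult_mono Finite_Cartesian_Product.norm_nth_le)
  finally show ?thesis by simp
qed


lemma hfs_0: "hilbert_fun_space H ip \<Longrightarrow> 0 \<in> H"
  unfolding hilbert_fun_space_def by (elim conjE)
lemma hfs_plus: assumes "hilbert_fun_space H ip" "F \<in> H" "G \<in> H" shows "F + G \<in> H"
proof -
  have "\<forall>F\<in>H. \<forall>G\<in>H. F + G \<in> H" using assms(1) unfolding hilbert_fun_space_def by (elim conjE) assumption
  then show ?thesis using assms(2,3) by blast
qed
lemma hfs_sc: assumes "hilbert_fun_space H ip" "F \<in> H" shows "sc c F \<in> H"
proof -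
  have "\<forall>c. \<forall>F\<in>H. sc c F \<in> H" using assms(1) unfolding hilbert_fun_space_def by (elim conjE) assumption
  then show ?thesis using assms(2) by blast
qed
lemma hfs_addl: assumes "hilbert_fun_space H ip" "F \<in> H" "G \<in> H" "K \<in> H" shows "ip (F + G) K = ip F K + ip G K"
proof -
  have "\<forall>F\<in>H. \<forall>G\<in>H. \<forall>K\<in>H. ip (F + G) K = ip F K + ip G K" using assms(1) unfolding hilbert_fun_space_def by (elim conjE) assumption
  then show ?thesis using assms(2-4) by blast
qed
lemma hfs_scl: assumes "hilbert_fun_space H ip" "F \<in> H" "G \<in> H" shows "ip (sc c F) G = c * ip F G"
proof -
  have "\<forall>c. \<forall>F\<in>H. \<forall>G\<in>H. ip (sc c F) G = c * ip F G" using assms(1) unfolding hilbert_fun_space_def by (elim conjE) assumption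
  then show ?thesis using assms(2-3) by blast
qed
lemma hfs_cnj: assumes "hilbert_fun_space H ip" "F \<in> H" "G \<in> H" shows "ip G F = cnj (ip F G)"
proof -
  have "\<forall>F\<in>H. \<forall>G\<in>H. ip G F = cnj (ip F G)" using assms(1) unfolding hilbert_fun_space_def by (elim conjE) assumption
  then show ?thesis using assms(2-3) by blast
qed
lemma hfs_zero_left: assumes "hilbert_fun_space H ip" "K \<in> H" shows "ip 0 K = 0"
proof -
  have z: "0 \<in> H" using hfs_0[OF assms(1)] .
  have "ip (0 + 0) K = ip 0 K + ip 0 K" using hfs_addl[OF assms(1) z z assms(2)] .
  then have "ip 0 K = ip 0 K + ip 0 K" by (simp only: add_0_left)
  then show ?thesis by (metis add_cancel_right_right)
qed
lemma hfs_zero_right: assumes "hilbert_fun_space H ip" "K \<in> H" shows "ip K 0 = 0"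
proof -
  have z: "0 \<in> H" using hfs_0[OF assms(1)] .
  have "ip K 0 = cnj (ip 0 K)" using hfs_cnj[OF assms(1) z assms(2)] .
  then show ?thesis using hfs_zero_left[OF assms] by (metis complex_cnj_zero)
qed
lemma hfs_add_right: assumes "hilbert_fun_space H ip" "K \<in> H" "F \<in> H" "G \<in> H"
  shows "ip K (F + G) = ip K F + ip K G"
proof -
  have FG: "F + G \<in> H" using hfs_plus[OF assms(1,3,4)] .
  have "ip K (F + G) = cnj (ip (F + G) K)" using hfs_cnj[OF assms(1) FG assms(2)] .
  also have "\<dots> = cnj (ip F K) + cnj (ip G K)" using hfs_addl[OF assms(1,3,4,2)] by simp
  also have "\<dots> = ip K F + ip K G" using hfs_cnj[OF assms(1,2,3)] hfs_cnj[OF assms(1,2,4)] by simp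
  finally show ?thesis .
qed
lemma hfs_sc_right: assumes "hilbert_fun_space H ip" "K \<in> H" "F \<in> H"
  shows "ip K (sc c F) = cnj c * ip K F"
proof -
  have cF: "sc c F \<in> H" using hfs_sc[OF assms(1,3)] .
  have "ip K (sc c F) = cnj (ip (sc c F) K)" using hfs_cnj[OF assms(1) cF assms(2)] .
  also have "\<dots> = cnj c * cnj (ip F K)" using hfs_scl[OF assms(1,3,2)] by simp
  also have "\<dots> = cnj c * ip K F" using hfs_cnj[OF assms(1,2,3)] by simp
  finally show ?thesis .
qed
lemma hfs_sum_mem: assumes "hilbert_fun_space H ip" "finite T" "\<And>t. t \<in> T \<Longrightarrow> a t \<in> H"
  shows "(\<Sum>t\<in>T. sc (c t) (a t)) \<in> H"
  using assms(2,3)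
proof (induction T rule: finite_induct)
  case empty then show ?case using hfs_0[OF assms(1)] by (simp only: sum.empty)
next
  case (insert x F)
  have m: "sc (c x) (a x) \<in> H" using hfs_sc[OF assms(1)] insert(4) by blast
  have "(\<Sum>t\<in>F. sc (c t) (a t)) \<in> H" using insert(3,4) by blast
  then have "sc (c x) (a x) + (\<Sum>t\<in>F. sc (c t) (a t)) \<in> H" using hfs_plus[OF assms(1) m] by blast
  then show ?case by (subst sum.insert[OF insert(1,2)])
qed
lemma hfs_sum_right: assumes "hilbert_fun_space H ip" "finite T" "\<And>t. t \<in> T \<Longrightarrow> a t \<in> H" "K \<in> H"
  shows "ip K (\<Sum>t\<in>T. sc (c t) (a t)) = (\<Sum>t\<in>T. cnj (c t) * ip K (a t))"
  using assms(2,3)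
proof (induction T rule: finite_induct)
  case empty then show ?case using hfs_zero_right[OF assms(1,4)] by (simp only: sum.empty)
next
  case (insert x F)
  have ax: "a x \<in> H" using insert by blast
  have m: "sc (c x) (a x) \<in> H" using hfs_sc[OF assms(1) ax] .
  have s: "(\<Sum>t\<in>F. sc (c t) (a t)) \<in> H" by (rule hfs_sum_mem[OF assms(1) insert(1)]) (use insert(4) in blast)
  have "ip K (\<Sum>t\<in>insert x F. sc (c t) (a t)) = ip K (sc (c x) (a x) + (\<Sum>t\<in>F. sc (c t) (a t)))"
    by (subst sum.insert[OF insert(1,2)]) (rule refl)
  also have "\<dots> = ip K (sc (c x) (a x)) + ip K (\<Sum>t\<in>F. sc (c t) (a t))"
    by (rule hfs_add_right[OF assms(1,4) m s])
  also have "\<dots> = cnj (c x) * ip K (a x) + (\<Sum>t\<in>F. cnj (c t) * ip K (a t))"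
  proof -
    have IH: "ip K (\<Sum>t\<in>F. sc (c t) (a t)) = (\<Sum>t\<in>F. cnj (c t) * ip K (a t))"
      by (rule insert(3)) (use insert(4) in blast)
    show ?thesis by (simp only: IH hfs_sc_right[OF assms(1,4) ax])
  qed
  also have "\<dots> = (\<Sum>t\<in>insert x F. cnj (c t) * ip K (a t))" by (rule sum.insert[OF insert(1,2), symmetric])
  finally show ?case .
qed



lemma qf_hfs: "quasi_free \<Omega> H ip \<Longrightarrow> hilbert_fun_space H ip"
  unfolding quasi_free_def by (elim conjE)
lemma qf_mult: assumes "quasi_free \<Omega> H ip" "\<phi> \<in> Aalg \<Omega>" "F \<in> H" shows "mmult \<phi> F \<in> H"
proof -
  have "\<forall>\<phi>\<in>Aalg \<Omega>. \<forall>F\<in>H. mmult \<phi> F \<in> H \<and> hnorm ip (mmult \<phi> F) \<le> supnorm \<Omega> \<phi> * hnorm ip F"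
    using assms(1) unfolding quasi_free_def by (elim conjE) assumption
  then show ?thesis using assms(2,3) by blast
qed
lemma qf_eval: assumes "quasi_free \<Omega> H ip" "z \<in> \<Omega>" obtains C where "\<And>F. F \<in> H \<Longrightarrow> norm (F z) \<le> C * hnorm ip F"
proof -
  have "\<forall>z\<in>\<Omega>. \<exists>r>0. \<exists>C. \<forall>w\<in>\<Omega> \<inter> ball z r. \<forall>F\<in>H. norm (F w) \<le> C * hnorm ip F"
    using assms(1) unfolding quasi_free_def by (elim conjE) assumption
  then obtain r C where "r > 0" "\<forall>w\<in>\<Omega> \<inter> ball z r. \<forall>F\<in>H. norm (F w) \<le> C * hnorm ip F"
    using assms(2) by blast
  moreover have "z \<in> \<Omega> \<inter> ball z r" using assms(2) \<open>r > 0\<close> by simp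
  ultimately show ?thesis using that by blast
qed

lemma hfs_diff_mem: assumes "hilbert_fun_space H ip" "u \<in> H" "a \<in> H" shows "u - a \<in> H"
proof -
  have "sc (-1) a \<in> H" using hfs_sc assms by blast
  then have "u + sc (-1) a \<in> H" using hfs_plus assms by blast
  moreover have "u + sc (-1) a = u - a" by (simp add: fun_eq_iff sc_def)
  ultimately show ?thesis by simp
qed

lemma pspan_zero:
  assumes qf: "quasi_free \<Omega> H ip" and qf': "quasi_free \<Omega> H' ip'"
    and fH: "\<And>i. f i \<in> H" and gH: "\<And>i. g i \<in> H'"
    and gen: "\<And>l. l2inner (g l z) gi = l2inner (f l z) w"
    and ab: "(a, b) \<in> pspan {(mmult \<phi> (f i), mmult \<phi> (g i)) | \<phi> i. \<phi> \<in> Aalg \<Omega>}"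
  shows "a \<in> H \<and> b \<in> H' \<and> l2inner (b z) gi = l2inner (a z) w"
proof -
  let ?S = "{(mmult \<phi> (f i), mmult \<phi> (g i)) | \<phi> i. \<phi> \<in> Aalg \<Omega>}"
  obtain T c where T: "finite T" "T \<subseteq> ?S" and a: "a = (\<Sum>t\<in>T. sc (c t) (fst t))"
     and b: "b = (\<Sum>t\<in>T. sc (c t) (snd t))"
    using ab unfolding pspan_def by blast
  have hs: "hilbert_fun_space H ip" "hilbert_fun_space H' ip'" using qf_hfs[OF qf] qf_hfs[OF qf'] by blast+
  have mem: "fst t \<in> H \<and> snd t \<in> H'" if "t \<in> T" for t
  proof -
    have "\<exists>\<phi> i. t = (mmult \<phi> (f i), mmult \<phi> (g i)) \<and> \<phi> \<in> Aalg \<Omega>" using T(2) that by blast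
    then obtain \<phi> i where "\<phi> \<in> Aalg \<Omega>" "t = (mmult \<phi> (f i), mmult \<phi> (g i))" by blast
    then show ?thesis using qf_mult[OF qf] qf_mult[OF qf'] fH gH by simp
  qed
  have "a \<in> H" unfolding a by (rule hfs_sum_mem[OF hs(1) T(1)]) (use mem in blast)
  moreover have "b \<in> H'" unfolding b by (rule hfs_sum_mem[OF hs(2) T(1)]) (use mem in blast)
  moreover have "l2inner (b z) gi = l2inner (a z) w"
  proof -
    have "b z = (\<Sum>t\<in>T. c t *s snd t z)" unfolding b fsum_apply by (simp add: sc_def)
    then have "l2inner (b z) gi = (\<Sum>t\<in>T. c t * l2inner (snd t z) gi)" using l2_sum1[OF T(1)] by simp
    also have "\<dots> = (\<Sum>t\<in>T. c t * l2inner (fst t z) w)"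
    proof (rule sum.cong)
      fix t assume "t \<in> T"
      then have "\<exists>\<phi> i. t = (mmult \<phi> (f i), mmult \<phi> (g i)) \<and> \<phi> \<in> Aalg \<Omega>" using T(2) by blast
      then obtain \<phi> i where "t = (mmult \<phi> (f i), mmult \<phi> (g i))" by blast
      then show "c t * l2inner (snd t z) gi = c t * l2inner (fst t z) w"
        by (simp add: mmult_def l2_scale1 gen)
    qed simp
    also have "\<dots> = l2inner (a z) w"
    proof -
      have "a z = (\<Sum>t\<in>T. c t *s fst t z)" unfolding a fsum_apply by (simp add: sc_def)
      then have "l2inner (a z) w = (\<Sum>t\<in>T. c t * l2inner (fst t z) w)"
        using l2_sum1[OF T(1), of c "\<lambda>t. fst t z" w] by simp
      then show ?thesis by simp
    qed
    finally show ?thesis .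
  qed
  ultimately show ?thesis by blast
qed

lemma small_zero: assumes "K \<ge> 0" "\<And>e. e > 0 \<Longrightarrow> norm (d::complex) \<le> K * e" shows "d = 0"
proof (rule ccontr)
  assume "d \<noteq> 0"
  then have p: "norm d > 0" by simp
  have "norm d \<le> K * (norm d / (K + 1))" using assms(2)[of "norm d / (K+1)"] p assms(1) by simp
  also have "\<dots> < norm d" using p assms(1) by (simp add: field_simps)
  finally show False by simp
qed

lemma delta_pointwise:
  assumes qf: "quasi_free \<Omega> H ip" and qf': "quasi_free \<Omega> H' ip'"
    and fH: "\<And>i. f i \<in> H" and gH: "\<And>i. g i \<in> H'" and z: "z \<in> \<Omega>"
    and gen: "\<And>l. l2inner (g l z) gi = l2inner (f l z) (w::complex^'m)"
    and uv: "(u, v) \<in> delta_graph \<Omega> H ip H' ip' f g"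
  shows "l2inner (v z) gi = l2inner (u z) w"
proof -
  have hs: "hilbert_fun_space H ip" "hilbert_fun_space H' ip'" using qf_hfs[OF qf] qf_hfs[OF qf'] by blast+
  obtain C where C: "\<And>F. F \<in> H \<Longrightarrow> norm (F z) \<le> C * hnorm ip F"
    using qf_eval[OF qf z] by blast
  obtain C' where C': "\<And>F. F \<in> H' \<Longrightarrow> norm (F z) \<le> C' * hnorm ip' F"
    using qf_eval[OF qf' z] by blast
  have uH: "u \<in> H" and vH: "v \<in> H'" using uv unfolding delta_graph_def by (simp_all only: mem_Collect_eq case_prod_conv)
  define M where "M = real CARD('m) * (norm gi + norm w)"
  have M0: "M \<ge> 0" unfolding M_def by simp
  define d where "d = l2inner (v z) gi - l2inner (u z) w"
  have "d = 0"
  proof (rule small_zero[of "M * (\<bar>C\<bar> + \<bar>C'\<bar>)"])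
    show "M * (\<bar>C\<bar> + \<bar>C'\<bar>) \<ge> 0" using M0 by simp
    fix e :: real assume e: "e > 0"
    let ?PS = "pspan {(mmult \<phi> (f i), mmult \<phi> (g i)) | \<phi> i. \<phi> \<in> Aalg \<Omega>}"
    have "\<forall>\<epsilon>>0. \<exists>(a, b)\<in>?PS. sqrt ((hnorm ip (u - a))\<^sup>2 + (hnorm ip' (v - b))\<^sup>2) < \<epsilon>"
      using uv unfolding delta_graph_def mem_Collect_eq case_prod_conv by (elim conjE)
    then have "\<exists>(a, b)\<in>?PS. sqrt ((hnorm ip (u - a))\<^sup>2 + (hnorm ip' (v - b))\<^sup>2) < e" using e by blast
    then obtain a b where ab: "(a, b) \<in> ?PS"
      and close: "sqrt ((hnorm ip (u - a))\<^sup>2 + (hnorm ip' (v - b))\<^sup>2) < e" by blast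
    have P: "a \<in> H \<and> b \<in> H' \<and> l2inner (b z) gi = l2inner (a z) w"
      using pspan_zero[OF qf qf' fH gH gen ab] .
    have ua: "u - a \<in> H" using hfs_diff_mem[OF hs(1) uH] P by blast
    have vb: "v - b \<in> H'" using hfs_diff_mem[OF hs(2) vH] P by blast
    have h1: "\<bar>hnorm ip (u - a)\<bar> \<le> e"
    proof -
      have "\<bar>hnorm ip (u - a)\<bar> = sqrt ((hnorm ip (u - a))\<^sup>2)" by simp
      also have "\<dots> \<le> sqrt ((hnorm ip (u - a))\<^sup>2 + (hnorm ip' (v - b))\<^sup>2)" by simp
      finally show ?thesis using close by linarith
    qed
    have h2: "\<bar>hnorm ip' (v - b)\<bar> \<le> e"
    proof -
      have "\<bar>hnorm ip' (v - b)\<bar> = sqrt ((hnorm ip' (v - b))\<^sup>2)" by simp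
      also have "\<dots> \<le> sqrt ((hnorm ip (u - a))\<^sup>2 + (hnorm ip' (v - b))\<^sup>2)" by simp
      finally show ?thesis using close by linarith
    qed
    have n1: "norm ((u - a) z) \<le> \<bar>C\<bar> * e"
    proof -
      have "norm ((u - a) z) \<le> C * hnorm ip (u - a)" using C[OF ua] .
      also have "\<dots> \<le> \<bar>C\<bar> * \<bar>hnorm ip (u - a)\<bar>" by (metis abs_ge_self abs_mult)
      also have "\<dots> \<le> \<bar>C\<bar> * e" using h1 by (simp add: mult_left_mono)
      finally show ?thesis .
    qed
    have n2: "norm ((v - b) z) \<le> \<bar>C'\<bar> * e"
    proof -
      have "norm ((v - b) z) \<le> C' * hnorm ip' (v - b)" using C'[OF vb] .
      also have "\<dots> \<le> \<bar>C'\<bar> * \<bar>hnorm ip' (v - b)\<bar>" by (metis abs_ge_self abs_mult)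
      also have "\<dots> \<le> \<bar>C'\<bar> * e" using h2 by (simp add: mult_left_mono)
      finally show ?thesis .
    qed
    have "d = l2inner ((v - b) z) gi - l2inner ((u - a) z) w"
      unfolding d_def using P by (simp add: l2_diff1)
    then have "norm d \<le> norm (l2inner ((v - b) z) gi) + norm (l2inner ((u - a) z) w)"
      by (simp add: norm_triangle_ineq4)
    also have "\<dots> \<le> real CARD('m) * norm ((v - b) z) * norm gi + real CARD('m) * norm ((u - a) z) * norm w"
      by (intro add_mono l2_bound)
    also have "\<dots> \<le> real CARD('m) * (\<bar>C'\<bar> * e) * norm gi + real CARD('m) * (\<bar>C\<bar> * e) * norm w"
      using n1 n2 by (intro add_mono mult_right_mono mult_left_mono) auto
    also have "\<dots> \<le> M * (\<bar>C\<bar> + \<bar>C'\<bar>) * e"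
    proof -
      have q1: "\<bar>C'\<bar> * e \<le> (\<bar>C\<bar> + \<bar>C'\<bar>) * e" and q2: "\<bar>C\<bar> * e \<le> (\<bar>C\<bar> + \<bar>C'\<bar>) * e"
        using e by (simp_all add: mult_right_mono)
      have "real CARD('m) * (\<bar>C'\<bar> * e) * norm gi \<le> real CARD('m) * ((\<bar>C\<bar> + \<bar>C'\<bar>) * e) * norm gi"
        by (intro mult_right_mono mult_left_mono q1) auto
      moreover have "real CARD('m) * (\<bar>C\<bar> * e) * norm w \<le> real CARD('m) * ((\<bar>C\<bar> + \<bar>C'\<bar>) * e) * norm w"
        by (intro mult_right_mono mult_left_mono q2) auto
      ultimately show ?thesis unfolding M_def by (simp add: algebra_simps)
    qed
    finally show "norm d \<le> M * (\<bar>C\<bar> + \<bar>C'\<bar>) * e" .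
  qed
  then show ?thesis unfolding d_def by simp
qed


lemma AG_sum:
  assumes hs: "hilbert_fun_space H ip" "hilbert_fun_space H' ip'"
    and G: "\<And>u v. (u, v) \<in> G \<Longrightarrow> u \<in> H \<and> v \<in> H'"
    and T: "finite T" and yx: "\<And>t. t \<in> T \<Longrightarrow> (y t, x t) \<in> adjoint_graph H ip H' ip' G"
  shows "(\<Sum>t\<in>T. sc (c t) (y t), \<Sum>t\<in>T. sc (c t) (x t)) \<in> adjoint_graph H ip H' ip' G"
  using T yx
proof (induction T rule: finite_induct)
  case empty
  have "0 \<in> H" "0 \<in> H'" using hfs_0[OF hs(1)] hfs_0[OF hs(2)] by blast+
  moreover have "\<forall>(u, v)\<in>G. ip' v 0 = ip u 0" using G hfs_zero_right[OF hs(1)] hfs_zero_right[OF hs(2)] by auto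
  ultimately show ?case unfolding adjoint_graph_def by (simp only: sum.empty) blast
next
  case (insert a F)
  have ya: "y a \<in> H'" "x a \<in> H" using insert(4)[of a] unfolding adjoint_graph_def by auto
  have yF: "\<And>t. t \<in> F \<Longrightarrow> y t \<in> H'" and xF: "\<And>t. t \<in> F \<Longrightarrow> x t \<in> H"
    using insert(4) unfolding adjoint_graph_def by auto
  have rel: "\<And>t u v. t \<in> insert a F \<Longrightarrow> (u, v) \<in> G \<Longrightarrow> ip' v (y t) = ip u (x t)"
    using insert(4) unfolding adjoint_graph_def by fastforce
  have m1: "(\<Sum>t\<in>insert a F. sc (c t) (y t)) \<in> H'" by (rule hfs_sum_mem[OF hs(2)]) (use insert ya yF in auto)
  have m2: "(\<Sum>t\<in>insert a F. sc (c t) (x t)) \<in> H" by (rule hfs_sum_mem[OF hs(1)]) (use insert ya xF in auto)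
  have "ip' v (\<Sum>t\<in>insert a F. sc (c t) (y t)) = ip u (\<Sum>t\<in>insert a F. sc (c t) (x t))"
    if uv: "(u, v) \<in> G" for u v
  proof -
    have uH: "u \<in> H" and vH: "v \<in> H'" using G uv by auto
    have "ip' v (\<Sum>t\<in>insert a F. sc (c t) (y t)) = (\<Sum>t\<in>insert a F. cnj (c t) * ip' v (y t))"
      by (rule hfs_sum_right[OF hs(2)]) (use insert ya yF vH in auto)
    also have "\<dots> = (\<Sum>t\<in>insert a F. cnj (c t) * ip u (x t))"
      by (rule sum.cong[OF refl]) (simp add: rel[OF _ uv])
    also have "\<dots> = ip u (\<Sum>t\<in>insert a F. sc (c t) (x t))"
      by (rule hfs_sum_right[OF hs(1), symmetric]) (use insert ya xF uH in auto)
    finally show ?thesis .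
  qed
  then show ?case unfolding adjoint_graph_def using m1 m2 by blast
qed

theorem lemma3:
  fixes \<Omega> :: "(complex^'n) set"
    and H H' :: "(complex^'n \<Rightarrow> complex^'m) set"
    and ip ip' :: "(complex^'n \<Rightarrow> complex^'m) \<Rightarrow> (complex^'n \<Rightarrow> complex^'m) \<Rightarrow> complex"
    and f g :: "'m \<Rightarrow> (complex^'n \<Rightarrow> complex^'m)"
    and k k' :: "'m \<Rightarrow> complex^'n \<Rightarrow> (complex^'n \<Rightarrow> complex^'m)"
    and X :: "complex^'n \<Rightarrow> 'm \<Rightarrow> 'm \<Rightarrow> complex"
  assumes "bounded_domain \<Omega>"
    and "quasi_free \<Omega> H ip" and "quasi_free \<Omega> H' ip'"
    and "generating_set \<Omega> H ip f" and "generating_set \<Omega> H' ip' g"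
    and "\<And>i z. z \<in> \<Omega> \<Longrightarrow> k i z \<in> H \<and> (\<forall>F\<in>H. ip F (k i z) = l2inner (F z) (f i z))"
    and "\<And>i z. z \<in> \<Omega> \<Longrightarrow> k' i z \<in> H' \<and> (\<forall>F\<in>H'. ip' F (k' i z) = l2inner (F z) (g i z))"
    and "\<And>z i l. z \<in> \<Omega> \<Longrightarrow>
           l2inner (\<Sum>j\<in>UNIV. X z i j *s f j z) (f l z) = l2inner (g i z) (g l z)"
  shows "fspan {k' i z | i z. z \<in> \<Omega>}
           \<subseteq> fst ` adjoint_graph H ip H' ip' (delta_graph \<Omega> H ip H' ip' f g)
         \<and> (\<forall>z\<in>\<Omega>. \<forall>i. (k' i z, \<Sum>j\<in>UNIV. sc (X z i j) (k j z))
                          \<in> adjoint_graph H ip H' ip' (delta_graph \<Omega> H ip H' ip' f g))"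
proof -
  note A = assms
  have qf: "quasi_free \<Omega> H ip" and qf': "quasi_free \<Omega> H' ip'" using assms by blast+
  have hs: "hilbert_fun_space H ip" "hilbert_fun_space H' ip'" using qf_hfs[OF qf] qf_hfs[OF qf'] by blast+
  have fH': "\<forall>i. f i \<in> H" using assms(4) unfolding generating_set_def by (elim conjE) assumption
  have gH': "\<forall>i. g i \<in> H'" using assms(5) unfolding generating_set_def by (elim conjE) assumption
  have fH: "\<And>i. f i \<in> H" using fH' by blast
  have gH: "\<And>i. g i \<in> H'" using gH' by blast
  let ?AG = "adjoint_graph H ip H' ip' (delta_graph \<Omega> H ip H' ip' f g)"
  have P2: "\<forall>z\<in>\<Omega>. \<forall>i. (k' i z, \<Sum>j\<in>UNIV. sc (X z i j) (k j z)) \<in> ?AG"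
  proof (intro ballI allI)
    fix z i assume z: "z \<in> \<Omega>"
    define w where "w = (\<Sum>j\<in>UNIV. X z i j *s f j z)"
    have gen: "l2inner (g l z) (g i z) = l2inner (f l z) w" for l
    proof -
      have "l2inner (f l z) w = cnj (l2inner w (f l z))" by (rule l2_cnj)
      also have "\<dots> = cnj (l2inner (g i z) (g l z))" unfolding w_def using assms(8)[OF z] by simp
      also have "\<dots> = l2inner (g l z) (g i z)" using l2_cnj by metis
      finally show ?thesis by simp
    qed
    have kH: "\<And>j. k j z \<in> H" using assms(6)[OF z] by blast
    have xH: "(\<Sum>j\<in>UNIV. sc (X z i j) (k j z)) \<in> H" by (rule hfs_sum_mem[OF hs(1)]) (auto simp: kH)
    have k'H: "k' i z \<in> H'" using assms(7)[OF z] by blast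
    show "(k' i z, \<Sum>j\<in>UNIV. sc (X z i j) (k j z)) \<in> ?AG"
      unfolding adjoint_graph_def
    proof (intro CollectI case_prodI conjI k'H xH ballI)
      fix uv assume uv: "uv \<in> delta_graph \<Omega> H ip H' ip' f g"
      obtain u v where uvd: "uv = (u, v)" by fastforce
      have uH: "u \<in> H" and vH: "v \<in> H'" using uv uvd unfolding delta_graph_def by (simp_all only: mem_Collect_eq case_prod_conv)
      have "ip' v (k' i z) = l2inner (v z) (g i z)" using assms(7)[OF z] vH by blast
      also have "\<dots> = l2inner (u z) w"
        by (rule delta_pointwise[OF qf qf' fH gH z gen]) (use uv uvd in simp)
      also have "\<dots> = (\<Sum>j\<in>UNIV. cnj (X z i j) * l2inner (u z) (f j z))"
        unfolding w_def by (rule l2_sum2) simp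
      also have "\<dots> = (\<Sum>j\<in>UNIV. cnj (X z i j) * ip u (k j z))"
        using assms(6)[OF z] uH by simp
      also have "\<dots> = ip u (\<Sum>j\<in>UNIV. sc (X z i j) (k j z))"
        by (rule hfs_sum_right[OF hs(1), symmetric]) (auto simp: kH uH)
      finally show "case uv of (u, v) \<Rightarrow> ip' v (k' i z) = ip u (\<Sum>j\<in>UNIV. sc (X z i j) (k j z))"
        using uvd by simp
    qed
  qed
  have DGsub: "\<And>u v. (u, v) \<in> delta_graph \<Omega> H ip H' ip' f g \<Longrightarrow> u \<in> H \<and> v \<in> H'"
    unfolding delta_graph_def by (simp_all only: mem_Collect_eq case_prod_conv)
  have P1: "fspan {k' i z | i z. z \<in> \<Omega>} \<subseteq> fst ` ?AG"
  proof
    fix y assume "y \<in> fspan {k' i z | i z. z \<in> \<Omega>}"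
    then obtain T c where T: "finite T" "T \<subseteq> {k' i z | i z. z \<in> \<Omega>}" and y: "y = (\<Sum>t\<in>T. sc (c t) t)"
      unfolding fspan_def by blast
    have "\<forall>t\<in>T. \<exists>x. (t, x) \<in> ?AG" using T(2) P2 by blast
    then obtain x where x: "\<And>t. t \<in> T \<Longrightarrow> (t, x t) \<in> ?AG" by metis
    have "(\<Sum>t\<in>T. sc (c t) t, \<Sum>t\<in>T. sc (c t) (x t)) \<in> ?AG"
      by (rule AG_sum[OF hs DGsub T(1)]) (use x in auto)
    then show "y \<in> fst ` ?AG" unfolding y by force
  qed
  show ?thesis using P1 P2 by blast
qed

end
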